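(* Let $G=B(m;R,S,T)$ be a connected bicirculant of degree $d=|R|+|S|\ge 4$ with $|R|,|T|\ge 3$. Let $a\in R$ and $b\in T$ with $a,b\ne m/2$, and let $H$ be the spanning subgraph of $G$ obtained by removing all edges $u_iu_{i\pm a}$ and $v_iv_{i\pm b}$, i.e. $H=B(m;R\setminus\{a,-a\},S,T\setminus\{b,-b\})$. If every connected component of $H$ contains a hamilton cycle having at least two outer edges, then $G$ is hamiltonian.
   Context: For an integer $m\ge 1$ and subsets $R,S,T\subseteq\mathbb{Z}_m$ with $R=-R$, $T=-T$, $0\notin R\cup T$, $0\in S$ and $|R|=|T|$, the bicirculant $B(m;R,S,T)$ is the graph with vertex set $\{u_0,\dots,u_{m-1}\}\cup\{v_0,\dots,v_{m-1}\}$ and edge set $\{u_iu_{i+j}: i\in\mathbb{Z}_m, j\in R\}\cup\{v_iv_{i+j}: i\in\mathbb{Z}_m, j\in T\}\cup\{u_iv_{i+j}: i\in\mathbb{Z}_m, j\in S\}$ (indices mod $m$). Outer edges are those of the form $u_iu_{i+j}$ ($j\in R$). *)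

theory Defs
  imports Main
begin

text \<open>Vertices of a bicirculant B(m;R,S,T):
u_i = Inl i and v_i = Inr i for i < m.  Elements of Z_m are represented by
naturals below m; negation in Z_m is j maps to (m - j) mod m.\<close>

definition zneg :: "nat \<Rightarrow> nat \<Rightarrow> nat" where
  "zneg m j = (m - j) mod m"

definition is_bicirculant_data :: "nat \<Rightarrow> nat set \<Rightarrow> nat set \<Rightarrow> nat set \<Rightarrow> bool" where
  "is_bicirculant_data m R S T \<longleftrightarrow>
     m \<ge> 1 \<and> R \<subseteq> {..<m} \<and> S \<subseteq> {..<m} \<and> T \<subseteq> {..<m} \<and>
     zneg m ` R = R \<and> zneg m ` T = T \<and> 0 \<notin> R \<and> 0 \<notin> T \<and> 0 \<in> S \<and>
     card R = card T"

definition bic_verts :: "nat \<Rightarrow> (nat + nat) set" where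
  "bic_verts m = Inl ` {..<m} \<union> Inr ` {..<m}"

definition bic_edges :: "nat \<Rightarrow> nat set \<Rightarrow> nat set \<Rightarrow> nat set \<Rightarrow> (nat + nat) set set" where
  "bic_edges m R S T =
     {{Inl i, Inl ((i + j) mod m)} | i j. i < m \<and> j \<in> R} \<union>
     {{Inr i, Inr ((i + j) mod m)} | i j. i < m \<and> j \<in> T} \<union>
     {{Inl i, Inr ((i + j) mod m)} | i j. i < m \<and> j \<in> S}"

definition adj :: "'a set set \<Rightarrow> 'a \<Rightarrow> 'a \<Rightarrow> bool" where
  "adj E x y \<longleftrightarrow> {x, y} \<in> E"

definition graph_connected :: "'a set \<Rightarrow> 'a set set \<Rightarrow> bool" where
  "graph_connected V E \<longleftrightarrow> V \<noteq> {} \<and> (\<forall>x\<in>V. \<forall>y\<in>V. (adj E)\<^sup>*\<^sup>* x y)"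

definition component :: "'a set \<Rightarrow> 'a set set \<Rightarrow> 'a \<Rightarrow> 'a set" where
  "component V E x = {y \<in> V. (adj E)\<^sup>*\<^sup>* x y}"

definition is_cycle :: "'a set set \<Rightarrow> 'a list \<Rightarrow> bool" where
  "is_cycle E vs \<longleftrightarrow> length vs \<ge> 3 \<and> distinct vs \<and>
     (\<forall>i < length vs. {vs ! i, vs ! (Suc i mod length vs)} \<in> E)"

definition cycle_edges :: "'a list \<Rightarrow> 'a set set" where
  "cycle_edges vs = {{vs ! i, vs ! (Suc i mod length vs)} | i. i < length vs}"

definition hamiltonian :: "'a set \<Rightarrow> 'a set set \<Rightarrow> bool" where
  "hamiltonian V E \<longleftrightarrow> (\<exists>vs. is_cycle E vs \<and> set vs = V)"

definition outer_edge :: "(nat + nat) set \<Rightarrow> bool" where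
  "outer_edge e \<longleftrightarrow> (\<exists>i j. e = {Inl i, Inl j})"

end

theory Submission
  imports Defs
begin


fun pedges :: "'a list \<Rightarrow> 'a set set" where
  "pedges (x # y # xs) = insert {x, y} (pedges (y # xs))"
| "pedges _ = {}"

lemma pedges_nth: "pedges xs = {{xs ! k, xs ! Suc k} | k. Suc k < length xs}"
proof (induction xs rule: pedges.induct)
  case (1 x y xs)
  show ?case
  proof (rule set_eqI, rule iffI)
    fix e assume "e \<in> pedges (x # y # xs)"
    then have "e = {x,y} \<or> e \<in> pedges (y # xs)" by simp
    then show "e \<in> {{(x # y # xs) ! k, (x # y # xs) ! Suc k} | k. Suc k < length (x # y # xs)}"
    proof
      assume "e = {x,y}" then show ?thesis by (rule_tac CollectI, rule_tac x=0 in exI) simp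
    next
      assume "e \<in> pedges (y # xs)"
      then obtain k where "e = {(y#xs)!k, (y#xs)! Suc k}" "Suc k < length (y#xs)" using 1 by auto
      then show ?thesis by (rule_tac CollectI, rule_tac x="Suc k" in exI) simp
    qed
  next
    fix e assume "e \<in> {{(x # y # xs) ! k, (x # y # xs) ! Suc k} | k. Suc k < length (x # y # xs)}"
    then obtain k where k: "e = {(x # y # xs) ! k, (x # y # xs) ! Suc k}" "Suc k < length (x # y # xs)" by blast
    show "e \<in> pedges (x # y # xs)"
    proof (cases k)
      case 0 then show ?thesis using k by simp
    next
      case (Suc k') then show ?thesis using k 1 by auto
    qed
  qed
qed auto

lemma pedges_Cons: "xs \<noteq> [] \<Longrightarrow> pedges (x # xs) = insert {x, hd xs} (pedges xs)"
  by (cases xs) auto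

lemma pedges_append: "pedges (xs @ ys) = pedges xs \<union> pedges ys \<union> (if xs \<noteq> [] \<and> ys \<noteq> [] then {{last xs, hd ys}} else {})"
proof (induction xs rule: pedges.induct)
  case (1 x y xs)
  then show ?case by auto
next
  case ("2_1")
  then show ?case by simp
next
  case ("2_2" x)
  then show ?case by (cases ys) auto
qed

lemma pedges_rev: "pedges (rev xs) = pedges xs"
proof (induction xs)
  case Nil then show ?case by simp
next
  case (Cons x xs)
  then show ?case by (cases xs) (auto simp: pedges_append last_rev insert_commute)
qed

lemma cycle_edges_pedges: "vs \<noteq> [] \<Longrightarrow> cycle_edges vs = insert {last vs, hd vs} (pedges vs)"
proof -
  assume ne: "vs \<noteq> []"
  define L where "L = length vs"
  have L: "L > 0" using ne L_def by simp
  show ?thesis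
  proof (rule set_eqI, rule iffI)
    fix e assume "e \<in> cycle_edges vs"
    then obtain i where i: "i < L" "e = {vs ! i, vs ! (Suc i mod L)}" unfolding cycle_edges_def L_def by blast
    show "e \<in> insert {last vs, hd vs} (pedges vs)"
    proof (cases "Suc i < L")
      case True then show ?thesis using i by (auto simp: pedges_nth L_def)
    next
      case False
      then have "i = length vs - 1" using i L_def by simp
      then show ?thesis using i ne by (auto simp: last_conv_nth hd_conv_nth L_def)
    qed
  next
    fix e assume "e \<in> insert {last vs, hd vs} (pedges vs)"
    then show "e \<in> cycle_edges vs"
    proof
      assume "e = {last vs, hd vs}"
      then show ?thesis unfolding cycle_edges_def using ne
        by (rule_tac CollectI, rule_tac x="length vs - 1" in exI) (auto simp: last_conv_nth hd_conv_nth)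
    next
      assume "e \<in> pedges vs"
      then obtain k where "e = {vs ! k, vs ! Suc k}" "Suc k < length vs" by (auto simp: pedges_nth)
      then show ?thesis unfolding cycle_edges_def by (rule_tac CollectI, rule_tac x=k in exI) simp
    qed
  qed
qed

lemma cycle_edges_rotate1: "cycle_edges (rotate1 vs) = cycle_edges vs"
proof (cases vs)
  case Nil then show ?thesis by simp
next
  case (Cons x xs)
  show ?thesis
  proof (cases "xs = []")
    case True then show ?thesis using Cons by simp
  next
    case False
    then show ?thesis using Cons
      by (simp add: cycle_edges_pedges pedges_append pedges_Cons insert_commute)
  qed
qed

lemma cycle_edges_rotate: "cycle_edges (rotate n vs) = cycle_edges vs"
  by (induction n) (auto simp: cycle_edges_rotate1)

lemma cycle_edges_rev: "cycle_edges (rev vs) = cycle_edges vs"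
  by (cases "vs = []") (auto simp: cycle_edges_pedges pedges_rev hd_rev last_rev insert_commute)

lemma is_cycle_alt: "is_cycle E vs \<longleftrightarrow> length vs \<ge> 3 \<and> distinct vs \<and> cycle_edges vs \<subseteq> E"
  unfolding is_cycle_def cycle_edges_def by blast

lemma rotate_hd_last:
  assumes "p \<in> cycle_edges vs"
  shows "\<exists>n. p = {last (rotate n vs), hd (rotate n vs)}"
proof -
  obtain i where i: "i < length vs" "p = {vs ! i, vs ! (Suc i mod length vs)}"
    using assms unfolding cycle_edges_def by blast
  define L where "L = length vs"
  have L: "L > 0" using i(1) unfolding L_def by linarith
  have "hd (rotate (Suc i) vs) = vs ! (Suc i mod L)"
    using L nth_rotate[of 0 vs "Suc i"] by (simp add: hd_conv_nth L_def del: rotate_Suc)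
  moreover have "last (rotate (Suc i) vs) = vs ! i"
  proof -
    have "last (rotate (Suc i) vs) = rotate (Suc i) vs ! (L - 1)"
      using L by (simp add: last_conv_nth L_def del: rotate_Suc)
    also have "\<dots> = vs ! ((L - 1 + Suc i) mod L)" using L by (simp add: nth_rotate L_def add.commute del: rotate_Suc)
    also have "(L - 1 + Suc i) = L + i" using L by simp
    also have "(L + i) mod L = i" using i L_def by simp
    finally show ?thesis .
  qed
  ultimately show ?thesis using i L_def by (rule_tac x="Suc i" in exI) (auto simp: insert_commute)
qed

lemma orient:
  assumes "is_cycle E vs" "{x, y} \<in> cycle_edges vs"
  shows "\<exists>ws. set ws = set vs \<and> distinct ws \<and> length ws = length vs \<and> cycle_edges ws = cycle_edges vs
     \<and> hd ws = y \<and> last ws = x"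
proof -
  obtain n where n: "{x,y} = {last (rotate n vs), hd (rotate n vs)}" using rotate_hd_last assms(2) by blast
  have d: "distinct vs" "length vs \<ge> 3" using assms(1) by (auto simp: is_cycle_alt)
  have ne: "rotate n vs \<noteq> []" using d by auto
  from n have "(x = last (rotate n vs) \<and> y = hd (rotate n vs)) \<or> (x = hd (rotate n vs) \<and> y = last (rotate n vs))"
    by (auto simp: doubleton_eq_iff)
  then show ?thesis
  proof
    assume h: "x = last (rotate n vs) \<and> y = hd (rotate n vs)"
    show ?thesis using h d by (rule_tac x="rotate n vs" in exI) (simp add: cycle_edges_rotate)
  next
    assume h: "x = hd (rotate n vs) \<and> y = last (rotate n vs)"
    show ?thesis using h d ne by (rule_tac x="rev (rotate n vs)" in exI)
      (simp add: cycle_edges_rotate cycle_edges_rev hd_rev last_rev)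
  qed
qed

lemma pedges_sub: "pedges vs \<subseteq> cycle_edges vs"
  by (cases "vs = []") (auto simp: cycle_edges_pedges)

lemma merge:
  assumes Y: "is_cycle E Y" and X: "is_cycle E X" and disj: "set Y \<inter> set X = {}"
    and p: "{x, y} \<in> cycle_edges Y" and q: "{x', y'} \<in> cycle_edges X"
    and l1: "{x, x'} \<in> E" and l2: "{y, y'} \<in> E"
  shows "\<exists>Z. is_cycle E Z \<and> set Z = set Y \<union> set X \<and>
     (cycle_edges Y - {{x, y}}) \<union> (cycle_edges X - {{x', y'}}) \<subseteq> cycle_edges Z"
proof -
  obtain Y1 where Y1: "set Y1 = set Y" "distinct Y1" "length Y1 = length Y" "cycle_edges Y1 = cycle_edges Y"
     "hd Y1 = y" "last Y1 = x" using orient[OF Y p] by blast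
  have q': "{y', x'} \<in> cycle_edges X" using q by (simp add: insert_commute)
  obtain X1 where X1: "set X1 = set X" "distinct X1" "length X1 = length X" "cycle_edges X1 = cycle_edges X"
     "hd X1 = x'" "last X1 = y'" using orient[OF X q'] by blast
  have lY: "length Y \<ge> 3" "cycle_edges Y \<subseteq> E" using Y by (auto simp: is_cycle_alt)
  have lX: "length X \<ge> 3" "cycle_edges X \<subseteq> E" using X by (auto simp: is_cycle_alt)
  have neY: "Y1 \<noteq> []" using lY Y1 by auto
  have neX: "X1 \<noteq> []" using lX X1 by auto
  have ceY: "cycle_edges Y = insert {x,y} (pedges Y1)"
    using cycle_edges_pedges[OF neY] Y1 by (simp add: insert_commute)
  have ceX: "cycle_edges X = insert {x',y'} (pedges X1)"
    using cycle_edges_pedges[OF neX] X1 by (simp add: insert_commute)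
  define Z where "Z = Y1 @ X1"
  have ceZ: "cycle_edges Z = insert {y', y} (pedges Y1 \<union> pedges X1 \<union> {{x, x'}})"
    unfolding Z_def using neY neX Y1 X1 by (simp add: cycle_edges_pedges pedges_append)
  have "is_cycle E Z"
    unfolding is_cycle_alt
  proof (intro conjI)
    show "3 \<le> length Z" using Z_def lY Y1 by simp
    show "distinct Z" using Z_def Y1 X1 disj by simp
    show "cycle_edges Z \<subseteq> E" using ceZ ceY ceX lY lX l1 l2 by (auto simp: insert_commute)
  qed
  moreover have "set Z = set Y \<union> set X" using Z_def Y1 X1 by simp
  moreover have "(cycle_edges Y - {{x, y}}) \<union> (cycle_edges X - {{x', y'}}) \<subseteq> cycle_edges Z"
    using ceZ ceY ceX by auto
  ultimately show ?thesis by blast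
qed




lemma cedge_sub: "e \<in> cycle_edges vs \<Longrightarrow> e \<subseteq> set vs \<and> e \<noteq> {}"
  unfolding cycle_edges_def by (auto intro!: nth_mem mod_less_divisor)

lemma chain:
  assumes cyc: "\<And>j. j < Suc n \<Longrightarrow> is_cycle E (X j)"
    and disj: "\<And>j j'. j < Suc n \<Longrightarrow> j' < Suc n \<Longrightarrow> j \<noteq> j' \<Longrightarrow> set (X j) \<inter> set (X j') = {}"
    and pq: "\<And>j. j < n \<Longrightarrow> P j \<in> cycle_edges (X j) \<and> Q j \<in> cycle_edges (X (Suc j))"
    and lnk: "\<And>j. j < n \<Longrightarrow> \<exists>x y x' y'. P j = {x,y} \<and> Q j = {x',y'} \<and> {x,x'} \<in> E \<and> {y,y'} \<in> E"
    and ne: "\<And>j. Suc j < n \<Longrightarrow> P (Suc j) \<noteq> Q j"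
  shows "\<exists>Y. is_cycle E Y \<and> set Y = (\<Union>j<Suc n. set (X j)) \<and>
     (\<Union>j<Suc n. cycle_edges (X j)) - (P ` {..<n} \<union> Q ` {..<n}) \<subseteq> cycle_edges Y"
  using assms
proof (induction n)
  case 0
  then show ?case by (rule_tac x="X 0" in exI) auto
next
  case (Suc n)
  have "\<exists>Y. is_cycle E Y \<and> set Y = (\<Union>j<Suc n. set (X j)) \<and>
     (\<Union>j<Suc n. cycle_edges (X j)) - (P ` {..<n} \<union> Q ` {..<n}) \<subseteq> cycle_edges Y"
    using Suc.prems by (intro Suc.IH) auto
  then obtain Y where Y: "is_cycle E Y" "set Y = (\<Union>j<Suc n. set (X j))"
    "(\<Union>j<Suc n. cycle_edges (X j)) - (P ` {..<n} \<union> Q ` {..<n}) \<subseteq> cycle_edges Y" by blast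
  have Pn: "P n \<in> cycle_edges (X n)" "Q n \<in> cycle_edges (X (Suc n))" using Suc.prems(3)[of n] by auto
  have Pnsub: "P n \<subseteq> set (X n)" "P n \<noteq> {}" using cedge_sub[OF Pn(1)] by auto
  have "P n \<notin> P ` {..<n}"
  proof
    assume "P n \<in> P ` {..<n}"
    then obtain j where j: "j < n" "P n = P j" by auto
    have "P j \<subseteq> set (X j)" using cedge_sub Suc.prems(3)[of j] j by auto
    then show False using Suc.prems(2)[of j n] j Pnsub by auto
  qed
  moreover have "P n \<notin> Q ` {..<n}"
  proof
    assume "P n \<in> Q ` {..<n}"
    then obtain j where j: "j < n" "P n = Q j" by auto
    have "Q j \<subseteq> set (X (Suc j))" using cedge_sub Suc.prems(3)[of j] j by auto
    show False
    proof (cases "Suc j = n")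
      case True then show False using Suc.prems(5)[of j] j by auto
    next
      case False then show False using Suc.prems(2)[of "Suc j" n] j Pnsub \<open>Q j \<subseteq> set (X (Suc j))\<close> by auto
    qed
  qed
  ultimately have PY: "P n \<in> cycle_edges Y" using Y(3) Pn(1) by blast
  obtain x y x' y' where l: "P n = {x,y}" "Q n = {x',y'}" "{x,x'} \<in> E" "{y,y'} \<in> E"
    using Suc.prems(4)[of n] by auto
  have dj: "set Y \<inter> set (X (Suc n)) = {}"
  proof -
    have "\<And>j. j < Suc n \<Longrightarrow> set (X j) \<inter> set (X (Suc n)) = {}" using Suc.prems(2) by simp
    then show ?thesis using Y(2) by blast
  qed
  obtain Z where Z: "is_cycle E Z" "set Z = set Y \<union> set (X (Suc n))"
    "(cycle_edges Y - {{x, y}}) \<union> (cycle_edges (X (Suc n)) - {{x', y'}}) \<subseteq> cycle_edges Z"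
    using merge[OF Y(1) Suc.prems(1)[of "Suc n"] dj, of x y x' y'] PY Pn l by auto
  show ?case
  proof (rule exI[of _ Z], intro conjI)
    show "is_cycle E Z" by fact
    show "set Z = (\<Union>j<Suc (Suc n). set (X j))" using Z(2) Y(2) by (auto simp: lessThan_Suc)
    show "(\<Union>j<Suc (Suc n). cycle_edges (X j)) - (P ` {..<Suc n} \<union> Q ` {..<Suc n}) \<subseteq> cycle_edges Z"
      using Z(3) Y(3) l by (auto simp: lessThan_Suc)
  qed
qed




definition sw :: "nat + nat \<Rightarrow> nat + nat" where "sw = case_sum Inr Inl"
definition sg :: "nat + nat \<Rightarrow> int" where "sg x = (if isl x then 1 else -1)"

lemma edge_inj:
  assumes "length vs \<ge> 3" "distinct vs" "k < length vs" "k' < length vs"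
    "{vs ! k, vs ! (Suc k mod length vs)} = {vs ! k', vs ! (Suc k' mod length vs)}"
  shows "k = k'"
proof -
  define L where "L = length vs"
  have L0: "L > 0" using assms(3) L_def by linarith
  have m1: "Suc k mod L < L" "Suc k' mod L < L" using L0 by auto
  have "vs ! k = vs ! k' \<or> (vs ! k = vs ! (Suc k' mod L) \<and> vs ! (Suc k mod L) = vs ! k')"
    using assms(5) L_def by (auto simp: doubleton_eq_iff)
  then show ?thesis
  proof
    assume "vs ! k = vs ! k'" then show ?thesis using assms nth_eq_iff_index_eq by blast
  next
    assume h: "vs ! k = vs ! (Suc k' mod L) \<and> vs ! (Suc k mod L) = vs ! k'"
    have e1: "k = Suc k' mod L" using h m1 assms nth_eq_iff_index_eq L_def by metis
    have e2: "k' = Suc k mod L" using h m1 assms nth_eq_iff_index_eq L_def by metis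
    have L3: "L \<ge> 3" using assms L_def by simp
    show ?thesis
    proof (cases "Suc k' < L")
      case True
      then have "k = Suc k'" using e1 by simp
      show ?thesis
      proof (cases "Suc k < L")
        case True
        then have "Suc k mod L = Suc k" by simp
        then show ?thesis using e2 \<open>k = Suc k'\<close> by linarith
      next
        case False
        then have "Suc k = L" using assms(3) L_def by simp
        then have "k' = 0" using e2 by simp
        then show ?thesis using \<open>Suc k = L\<close> \<open>k = Suc k'\<close> L3 by linarith
      qed
    next
      case False
      then have "Suc k' = L" using assms(4) L_def by simp
      then have "k = 0" using e1 by simp
      then have "k' = Suc 0 mod L" using e2 by simp
      then show ?thesis using \<open>Suc k' = L\<close> L3 by simp
    qed
  qed
qed

lemma sum_rot:
  fixes g :: "nat \<Rightarrow> int"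
  shows "(\<Sum>k<L. g (Suc k mod L)) = (\<Sum>k<L. g k)"
proof (cases L)
  case 0 then show ?thesis by simp
next
  case (Suc n)
  have "(\<Sum>k<Suc n. g (Suc k mod Suc n)) = (\<Sum>k<n. g (Suc k mod Suc n)) + g 0"
    by (simp add: sum.lessThan_Suc)
  also have "(\<Sum>k<n. g (Suc k mod Suc n)) = (\<Sum>k<n. g (Suc k))"
    by (rule sum.cong) auto
  also have "(\<Sum>k<n. g (Suc k)) + g 0 = (\<Sum>k<Suc n. g k)"
    by (subst sum.lessThan_Suc_shift) simp
  finally show ?thesis using Suc by simp
qed

lemma count_inner:
  assumes cyc: "is_cycle E vs" and clo: "\<And>x. x \<in> set vs \<Longrightarrow> sw x \<in> set vs"
    and c2: "card {e \<in> cycle_edges vs. outer_edge e} \<ge> 2"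
  shows "\<exists>f1 f2. f1 \<noteq> f2 \<and> f1 \<in> cycle_edges vs \<and> f2 \<in> cycle_edges vs \<and>
           (\<exists>i j. f1 = {Inr i, Inr j}) \<and> (\<exists>i j. f2 = {Inr i, Inr j})"
proof -
  define L where "L = length vs"
  have L3: "L \<ge> 3" and dist: "distinct vs" using cyc L_def by (auto simp: is_cycle_alt)
  define edg where "edg k = {vs ! k, vs ! (Suc k mod L)}" for k
  define LL where "LL = {k. k < L \<and> isl (vs ! k) \<and> isl (vs ! (Suc k mod L))}"
  define RR where "RR = {k. k < L \<and> \<not> isl (vs ! k) \<and> \<not> isl (vs ! (Suc k mod L))}"
  have swsw: "sw (sw x) = x" for x by (cases x) (auto simp: sw_def)
  have sgsw: "sg (sw x) = - sg x" for x by (cases x) (auto simp: sw_def sg_def)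
  have im: "sw ` set vs = set vs"
  proof
    show "sw ` set vs \<subseteq> set vs" using clo by auto
    show "set vs \<subseteq> sw ` set vs" using clo swsw by (metis image_eqI subsetI)
  qed
  have injsw: "inj_on sw (set vs)" by (metis inj_onI swsw)
  have "(\<Sum>x\<in>set vs. sg x) = (\<Sum>x\<in>sw ` set vs. sg x)" using im by simp
  also have "\<dots> = (\<Sum>x\<in>set vs. sg (sw x))" using sum.reindex[OF injsw] by simp
  also have "\<dots> = - (\<Sum>x\<in>set vs. sg x)" by (simp add: sgsw sum_negf)
  finally have S0: "(\<Sum>x\<in>set vs. sg x) = 0" by simp
  have injn: "inj_on (\<lambda>k. vs ! k) {..<L}" using dist L_def by (simp add: inj_on_nth)
  have imn: "(\<lambda>k. vs ! k) ` {..<L} = set vs" using L_def by (auto simp: set_conv_nth)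
  have S1: "(\<Sum>k<L. sg (vs ! k)) = 0"
    using sum.reindex[OF injn, of sg] imn S0 by simp
  have S2: "(\<Sum>k<L. sg (vs ! (Suc k mod L))) = 0"
    using sum_rot[of "\<lambda>k. sg (vs ! k)" L] S1 by simp
  have pw: "sg (vs ! k) + sg (vs ! (Suc k mod L)) =
      2 * (if k \<in> LL then 1 else 0) - 2 * (if k \<in> RR then 1 else 0)" if "k < L" for k
    using that by (auto simp: sg_def LL_def RR_def)
  have "(\<Sum>k<L. sg (vs ! k) + sg (vs ! (Suc k mod L))) = 0" using S1 S2 by (simp add: sum.distrib)
  moreover have "(\<Sum>k<L. sg (vs ! k) + sg (vs ! (Suc k mod L))) =
     (\<Sum>k<L. 2 * (if k \<in> LL then 1 else 0) - 2 * (if k \<in> RR then 1 else (0::int)))"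
    by (rule sum.cong) (simp_all add: pw)
  ultimately have "(\<Sum>k<L. 2 * (if k \<in> LL then 1 else 0) - 2 * (if k \<in> RR then 1 else (0::int))) = 0"
    by simp
  then have "2 * (\<Sum>k<L. (if k \<in> LL then 1 else (0::int))) = 2 * (\<Sum>k<L. (if k \<in> RR then 1 else (0::int)))"
    by (simp add: sum_subtractf sum_distrib_left)
  then have "(\<Sum>k<L. (if k \<in> LL then 1 else (0::int))) = (\<Sum>k<L. (if k \<in> RR then 1 else (0::int)))"
    by simp
  moreover have "(\<Sum>k<L. (if k \<in> LL then 1 else (0::int))) = int (card LL)"
    unfolding LL_def by (simp add: sum.If_cases Int_def)
  moreover have "(\<Sum>k<L. (if k \<in> RR then 1 else (0::int))) = int (card RR)"
    unfolding RR_def by (simp add: sum.If_cases Int_def)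
  ultimately have cLR: "card LL = card RR" by simp
  have outer_iff: "outer_edge (edg k) \<longleftrightarrow> k \<in> LL" if "k < L" for k
  proof
    assume "outer_edge (edg k)"
    then obtain i j where "edg k = {Inl i, Inl j}" unfolding outer_edge_def by blast
    then have "isl (vs ! k)" "isl (vs ! (Suc k mod L))" unfolding edg_def by (auto simp: doubleton_eq_iff)
    then show "k \<in> LL" using that LL_def by simp
  next
    assume "k \<in> LL"
    then have "isl (vs ! k)" "isl (vs ! (Suc k mod L))" unfolding LL_def by auto
    then have "vs ! k = Inl (projl (vs ! k))" "vs ! (Suc k mod L) = Inl (projl (vs ! (Suc k mod L)))"
      by simp_all
    then show "outer_edge (edg k)" unfolding outer_edge_def edg_def by metis
  qed
  have ceq: "cycle_edges vs = edg ` {..<L}" unfolding cycle_edges_def edg_def L_def by auto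
  have "{e \<in> cycle_edges vs. outer_edge e} = edg ` LL"
    using ceq outer_iff LL_def by auto
  then have "card {e \<in> cycle_edges vs. outer_edge e} \<le> card LL" by (simp add: card_image_le LL_def)
  then have "card RR \<ge> 2" using c2 cLR by simp
  then obtain k1 k2 where k: "k1 \<in> RR" "k2 \<in> RR" "k1 \<noteq> k2"
  proof -
    have "RR \<noteq> {}" using \<open>card RR \<ge> 2\<close> by auto
    then obtain k1 where k1: "k1 \<in> RR" by blast
    have fin: "finite RR" unfolding RR_def by simp
    have "card (RR - {k1}) \<ge> 1" using \<open>card RR \<ge> 2\<close> k1 fin by (simp add: card_Diff_singleton)
    then have "RR - {k1} \<noteq> {}" by (metis card.empty not_one_le_zero)
    then obtain k2 where "k2 \<in> RR - {k1}" by blast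
    then show ?thesis using k1 that by blast
  qed
  have ne: "edg k1 \<noteq> edg k2"
    using edge_inj[of vs k1 k2] k L3 dist L_def RR_def edg_def by auto
  have inr: "\<exists>i j. edg k = {Inr i, Inr j}" if "k \<in> RR" for k
  proof -
    have "\<not> isl (vs ! k)" "\<not> isl (vs ! (Suc k mod L))" using that RR_def by auto
    then have "vs ! k = Inr (projr (vs ! k))" "vs ! (Suc k mod L) = Inr (projr (vs ! (Suc k mod L)))"
      by simp_all
    then show ?thesis unfolding edg_def by metis
  qed
  show ?thesis
    using ne k inr ceq RR_def by (rule_tac x="edg k1" in exI, rule_tac x="edg k2" in exI) auto
qed




definition rot :: "nat \<Rightarrow> int \<Rightarrow> nat + nat \<Rightarrow> nat + nat" where
  "rot m c x = (case x of Inl i \<Rightarrow> Inl (nat ((int i + c) mod int m)) | Inr i \<Rightarrow> Inr (nat ((int i + c) mod int m)))"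

definition uu :: "nat \<Rightarrow> int \<Rightarrow> nat + nat" where "uu m p = Inl (nat (p mod int m))"
definition vv :: "nat \<Rightarrow> int \<Rightarrow> nat + nat" where "vv m p = Inr (nat (p mod int m))"

lemma rot_Inl: "rot m c (Inl i) = uu m (int i + c)" by (simp add: rot_def uu_def)
lemma rot_Inr: "rot m c (Inr i) = vv m (int i + c)" by (simp add: rot_def vv_def)

lemma uu_mod: "0 < m \<Longrightarrow> uu m (p mod int m + q) = uu m (p + q)"
  by (simp add: uu_def mod_add_left_eq)
lemma vv_mod: "0 < m \<Longrightarrow> vv m (p mod int m + q) = vv m (p + q)"
  by (simp add: vv_def mod_add_left_eq)

lemma rot_uu: "0 < m \<Longrightarrow> rot m c (uu m p) = uu m (p + c)"
  by (simp add: rot_Inl uu_def[of m p] uu_mod)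
lemma rot_vv: "0 < m \<Longrightarrow> rot m c (vv m p) = vv m (p + c)"
  by (simp add: rot_Inr vv_def[of m p] vv_mod)

lemma uu_nat: "uu m (int i + int j) = Inl ((i + j) mod m)"
  by (simp add: uu_def nat_mod_as_int flip: of_nat_add)
lemma vv_nat: "vv m (int i + int j) = Inr ((i + j) mod m)"
  by (simp add: vv_def nat_mod_as_int flip: of_nat_add)
lemma uu_lt: "i < m \<Longrightarrow> uu m (int i) = Inl i"
  using uu_nat[of m i 0] by simp
lemma vv_lt: "i < m \<Longrightarrow> vv m (int i) = Inr i"
  using vv_nat[of m i 0] by simp

lemma uu_eq: "0 < m \<Longrightarrow> \<exists>i<m. uu m p = Inl i"
  by (simp add: uu_def nat_less_iff)
lemma vv_eq: "0 < m \<Longrightarrow> \<exists>i<m. vv m p = Inr i"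
  by (simp add: vv_def nat_less_iff)

lemma verts_iff: "x \<in> bic_verts m \<longleftrightarrow> (\<exists>i<m. x = Inl i \<or> x = Inr i)"
  unfolding bic_verts_def by auto

lemma uu_verts: "0 < m \<Longrightarrow> uu m p \<in> bic_verts m"
  using uu_eq verts_iff by metis
lemma vv_verts: "0 < m \<Longrightarrow> vv m p \<in> bic_verts m"
  using vv_eq verts_iff by metis
lemma rot_verts: "0 < m \<Longrightarrow> rot m c x \<in> bic_verts m"
  by (cases x) (auto simp: rot_Inl rot_Inr uu_verts vv_verts)

lemma rot_rot: "0 < m \<Longrightarrow> rot m c (rot m d x) = rot m (d + c) x"
  by (cases x) (auto simp: rot_Inl rot_Inr rot_uu rot_vv add.assoc)

lemma rot_0: "x \<in> bic_verts m \<Longrightarrow> rot m 0 x = x"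
  by (auto simp: verts_iff rot_Inl rot_Inr uu_lt vv_lt)

lemma rot_inj: "0 < m \<Longrightarrow> inj_on (rot m c) (bic_verts m)"
proof (rule inj_onI)
  fix x y assume m: "0 < m" and xy: "x \<in> bic_verts m" "y \<in> bic_verts m" "rot m c x = rot m c y"
  have "rot m (-c) (rot m c x) = x" using rot_rot[OF m, of "-c" c x] rot_0[OF xy(1)] by simp
  moreover have "rot m (-c) (rot m c y) = y" using rot_rot[OF m, of "-c" c y] rot_0[OF xy(2)] by simp
  ultimately show "x = y" using xy(3) by metis
qed

lemma edges_verts: "0 < m \<Longrightarrow> e \<in> bic_edges m R S T \<Longrightarrow> e \<subseteq> bic_verts m"
  unfolding bic_edges_def bic_verts_def by auto

lemma edges_mono: "R \<subseteq> R' \<Longrightarrow> T \<subseteq> T' \<Longrightarrow> bic_edges m R S T \<subseteq> bic_edges m R' S T'"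
  unfolding bic_edges_def by blast

lemma rot_edge:
  assumes m: "0 < m" and e: "e \<in> bic_edges m R S T"
  shows "rot m c ` e \<in> bic_edges m R S T"
proof -
  from e consider
      (L) i j where "i < m" "j \<in> R" "e = {Inl i, Inl ((i + j) mod m)}"
    | (Rr) i j where "i < m" "j \<in> T" "e = {Inr i, Inr ((i + j) mod m)}"
    | (M) i j where "i < m" "j \<in> S" "e = {Inl i, Inr ((i + j) mod m)}"
    unfolding bic_edges_def by blast
  then show ?thesis
  proof cases
    case L
    obtain i' where i': "i' < m" "uu m (int i + c) = Inl i'" using uu_eq m by blast
    have "uu m (int i + int j + c) = uu m (int i' + int j)"
    proof -
      have h: "uu m ((int i + c) mod int m + int j) = uu m (int i + c + int j)" by (rule uu_mod[OF m])
      have "uu m (int i + int j + c) = uu m (int i + c + int j)" by (simp add: ac_simps)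
      then have "uu m (int i + int j + c) = uu m ((int i + c) mod int m + int j)" using h by simp
      also have "(int i + c) mod int m = int i'" using i' m by (auto simp: uu_def nat_eq_iff)
      finally show ?thesis .
    qed
    then have h2: "rot m c (Inl ((i + j) mod m)) = Inl ((i' + j) mod m)"
      using m by (simp only: flip: uu_nat) (simp add: rot_uu)
    have h1: "rot m c (Inl i) = Inl i'" using i' by (simp add: rot_Inl)
    have "rot m c ` e = {Inl i', Inl ((i' + j) mod m)}" using L h1 h2 by simp
    then show ?thesis using L i' unfolding bic_edges_def by blast
  next
    case Rr
    obtain i' where i': "i' < m" "vv m (int i + c) = Inr i'" using vv_eq m by blast
    have "vv m (int i + int j + c) = vv m (int i' + int j)"
    proof -
      have h: "vv m ((int i + c) mod int m + int j) = vv m (int i + c + int j)" by (rule vv_mod[OF m])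
      have "vv m (int i + int j + c) = vv m (int i + c + int j)" by (simp add: ac_simps)
      then have "vv m (int i + int j + c) = vv m ((int i + c) mod int m + int j)" using h by simp
      also have "(int i + c) mod int m = int i'" using i' m by (auto simp: vv_def nat_eq_iff)
      finally show ?thesis .
    qed
    then have h2: "rot m c (Inr ((i + j) mod m)) = Inr ((i' + j) mod m)"
      using m by (simp only: flip: vv_nat) (simp add: rot_vv)
    have h1: "rot m c (Inr i) = Inr i'" using i' by (simp add: rot_Inr)
    have "rot m c ` e = {Inr i', Inr ((i' + j) mod m)}" using Rr h1 h2 by simp
    then show ?thesis using Rr i' unfolding bic_edges_def by blast
  next
    case M
    obtain i' where i': "i' < m" "uu m (int i + c) = Inl i'" using uu_eq m by blast
    have "vv m (int i + int j + c) = vv m (int i' + int j)"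
    proof -
      have h: "vv m ((int i + c) mod int m + int j) = vv m (int i + c + int j)" by (rule vv_mod[OF m])
      have "vv m (int i + int j + c) = vv m (int i + c + int j)" by (simp add: ac_simps)
      then have "vv m (int i + int j + c) = vv m ((int i + c) mod int m + int j)" using h by simp
      also have "(int i + c) mod int m = int i'" using i' m by (auto simp: uu_def nat_eq_iff)
      finally show ?thesis .
    qed
    then have h2: "rot m c (Inr ((i + j) mod m)) = Inr ((i' + j) mod m)"
      using m by (simp only: flip: vv_nat) (simp add: rot_vv)
    have h1: "rot m c (Inl i) = Inl i'" using i' by (simp add: rot_Inl)
    have "rot m c ` e = {Inl i', Inr ((i' + j) mod m)}" using M h1 h2 by simp
    then show ?thesis using M i' unfolding bic_edges_def by blast
  qed
qed




lemma adj_sym: "adj E x y \<Longrightarrow> adj E y x"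
  unfolding adj_def by (simp add: insert_commute)

lemma rtr_sym: "(adj E)\<^sup>*\<^sup>* x y \<Longrightarrow> (adj E)\<^sup>*\<^sup>* y x"
proof (induction rule: rtranclp_induct)
  case base then show ?case by simp
next
  case (step y z)
  then show ?case using adj_sym by (metis converse_rtranclp_into_rtranclp)
qed

lemma comp_sub: "component V E x \<subseteq> V" unfolding component_def by auto

lemma comp_self: "x \<in> V \<Longrightarrow> x \<in> component V E x" unfolding component_def by auto

lemma comp_eq: "y \<in> component V E x \<Longrightarrow> component V E y = component V E x"
  unfolding component_def using rtr_sym rtranclp_trans by (smt (verit, ccfv_SIG) Collect_cong mem_Collect_eq)

lemma comp_meet: "y \<in> component V E x \<Longrightarrow> y \<in> component V E x' \<Longrightarrow> component V E x = component V E x'"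
  using comp_eq by metis

lemma comp_step: "y \<in> component V E x \<Longrightarrow> {y, z} \<in> E \<Longrightarrow> z \<in> V \<Longrightarrow> z \<in> component V E x"
  unfolding component_def adj_def by (auto intro: rtranclp.rtrancl_into_rtrancl)

lemma comp_disj: "component V E x \<noteq> component V E y \<Longrightarrow> component V E x \<inter> component V E y = {}"
  using comp_meet[of _ V E x y] by blast

lemma cycle_verts: "is_cycle E vs \<Longrightarrow> set vs \<subseteq> \<Union> E"
proof
  fix x assume c: "is_cycle E vs" and x: "x \<in> set vs"
  then obtain k where k: "k < length vs" "x = vs ! k" by (metis in_set_conv_nth)
  have "{vs ! k, vs ! (Suc k mod length vs)} \<in> E" using c k unfolding is_cycle_def by blast
  then show "x \<in> \<Union> E" using k by blast
qed

lemma map_nth_mod: assumes "i < length vs" shows "map f vs ! (Suc i mod length vs) = f (vs ! (Suc i mod length vs))"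
proof -
  have "0 < length vs" using assms by linarith
  then show ?thesis by simp
qed

lemma cycle_edges_map: "cycle_edges (map f vs) = (\<lambda>e. f ` e) ` cycle_edges vs"
proof (rule set_eqI, rule iffI)
  fix e assume "e \<in> cycle_edges (map f vs)"
  then obtain i where i: "i < length vs" "e = {f (vs ! i), f (vs ! (Suc i mod length vs))}"
    unfolding cycle_edges_def by (auto simp: map_nth_mod)
  then show "e \<in> (\<lambda>e. f ` e) ` cycle_edges vs" unfolding cycle_edges_def
    by (rule_tac image_eqI[of _ _ "{vs ! i, vs ! (Suc i mod length vs)}"]) auto
next
  fix e assume "e \<in> (\<lambda>e. f ` e) ` cycle_edges vs"
  then obtain i where i: "i < length vs" "e = {f (vs ! i), f (vs ! (Suc i mod length vs))}"
    unfolding cycle_edges_def by auto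
  then show "e \<in> cycle_edges (map f vs)" unfolding cycle_edges_def
    by (rule_tac CollectI, rule_tac x=i in exI) (simp add: map_nth_mod)
qed

lemma is_cycle_map: "is_cycle E vs \<Longrightarrow> inj_on f (set vs) \<Longrightarrow> (\<And>e. e \<in> E \<Longrightarrow> f ` e \<in> E') \<Longrightarrow> is_cycle E' (map f vs)"
  unfolding is_cycle_alt cycle_edges_map by (auto simp: distinct_map)

lemma is_cycle_mono: "is_cycle E vs \<Longrightarrow> E \<subseteq> E' \<Longrightarrow> is_cycle E' vs"
  unfolding is_cycle_alt by auto




lemma isl_rot: "isl (rot m c x) \<longleftrightarrow> isl x"
  by (cases x) (auto simp: rot_Inl rot_Inr uu_def vv_def)

locale bc =
  fixes m :: nat and R S T :: "nat set" and a b :: nat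
  assumes m0: "0 < m" and Rsub: "R \<subseteq> {..<m}" and Tsub: "T \<subseteq> {..<m}"
    and aR: "a \<in> R" and bT: "b \<in> T" and S0: "0 \<in> S"
begin

abbreviation "V \<equiv> bic_verts m"
abbreviation "EH \<equiv> bic_edges m (R - {a, zneg m a}) S (T - {b, zneg m b})"
abbreviation "EG \<equiv> bic_edges m R S T"

definition K :: "int \<Rightarrow> (nat + nat) set" where "K p = component V EH (uu m p)"
definition inJ :: "int \<Rightarrow> bool" where "inJ c \<longleftrightarrow> K c = K 0"

lemma EH_EG: "EH \<subseteq> EG" by (rule edges_mono) auto

lemma rot_adj: "(adj EH)\<^sup>*\<^sup>* x y \<Longrightarrow> (adj EH)\<^sup>*\<^sup>* (rot m c x) (rot m c y)"
proof (induction rule: rtranclp_induct)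
  case base then show ?case by simp
next
  case (step y z)
  have "rot m c ` {y, z} \<in> EH" using step(2) rot_edge[OF m0] unfolding adj_def by blast
  then have "adj EH (rot m c y) (rot m c z)" unfolding adj_def by simp
  then show ?case using step(3) by (meson rtranclp.rtrancl_into_rtrancl)
qed

lemma rot_comp:
  assumes x: "x \<in> V"
  shows "rot m c ` component V EH x = component V EH (rot m c x)"
proof
  show "rot m c ` component V EH x \<subseteq> component V EH (rot m c x)"
    unfolding component_def using rot_adj rot_verts[OF m0] by auto
next
  show "component V EH (rot m c x) \<subseteq> rot m c ` component V EH x"
  proof
    fix z assume z: "z \<in> component V EH (rot m c x)"
    then have zV: "z \<in> V" and r: "(adj EH)\<^sup>*\<^sup>* (rot m c x) z" unfolding component_def by auto
    have "(adj EH)\<^sup>*\<^sup>* (rot m (-c) (rot m c x)) (rot m (-c) z)" using rot_adj[OF r] .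
    moreover have "rot m (-c) (rot m c x) = x" using rot_rot[OF m0] rot_0[OF x] by simp
    ultimately have "rot m (-c) z \<in> component V EH x" unfolding component_def using rot_verts[OF m0] by auto
    moreover have "rot m c (rot m (-c) z) = z" using rot_rot[OF m0] rot_0[OF zV] by simp
    ultimately show "z \<in> rot m c ` component V EH x" by (metis image_eqI)
  qed
qed

lemma K_rot: "rot m c ` K p = K (p + c)"
  unfolding K_def using rot_comp[OF uu_verts[OF m0]] rot_uu[OF m0] by simp

lemma K_shift: "K p = K q \<Longrightarrow> K (p + c) = K (q + c)"
  by (metis K_rot)

lemma K_eq_iff: "K p = K q \<longleftrightarrow> inJ (q - p)"
proof
  assume "K p = K q"
  then have "K (p + - p) = K (q + - p)" by (rule K_shift)
  then show "inJ (q - p)" unfolding inJ_def by simp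
next
  assume "inJ (q - p)"
  then have "K (q - p + p) = K (0 + p)" unfolding inJ_def by (rule K_shift)
  then show "K p = K q" by simp
qed

lemma inJ_0: "inJ 0" unfolding inJ_def by simp

lemma inJ_add: "inJ x \<Longrightarrow> inJ y \<Longrightarrow> inJ (x + y)"
  using K_eq_iff[of x "x + y"] unfolding inJ_def by simp

lemma inJ_neg: "inJ x \<Longrightarrow> inJ (- x)"
  using K_eq_iff[of x 0] unfolding inJ_def by simp

lemma inJ_m: "inJ (int m)"
proof -
  have "uu m (int m) = uu m 0" by (simp add: uu_def)
  then show ?thesis unfolding inJ_def K_def by simp
qed

lemma inJ_mult_nat: "inJ x \<Longrightarrow> inJ (int n * x)"
  by (induction n) (auto simp: inJ_0 distrib_right intro: inJ_add)

lemma inJ_mult: "inJ x \<Longrightarrow> inJ (n * x)"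
proof (cases "n \<ge> 0")
  case True
  assume "inJ x"
  then show ?thesis using inJ_mult_nat[of x "nat n"] True by simp
next
  case False
  assume "inJ x"
  then have "inJ (int (nat (- n)) * x)" by (rule inJ_mult_nat)
  then have "inJ (- (int (nat (- n)) * x))" by (rule inJ_neg)
  then show ?thesis using False by simp
qed

lemma K_sub: "K p \<subseteq> V" unfolding K_def by (rule comp_sub)
lemma uu_K: "uu m p \<in> K p" unfolding K_def by (rule comp_self[OF uu_verts[OF m0]])

lemma vv_K: "vv m p \<in> K p"
proof -
  obtain i where i: "i < m" "uu m p = Inl i" using uu_eq[OF m0] by blast
  have v: "vv m p = Inr i" using i by (simp add: uu_def vv_def)
  have "{Inl i, Inr ((i + 0) mod m)} \<in> EH" unfolding bic_edges_def using i S0 by blast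
  then have "{uu m p, vv m p} \<in> EH" using i v by simp
  then show ?thesis unfolding K_def by (rule comp_step[OF comp_self[OF uu_verts[OF m0]]]) (rule vv_verts[OF m0])
qed

lemma K_meet: "x \<in> K p \<Longrightarrow> x \<in> K q \<Longrightarrow> K p = K q"
  unfolding K_def by (rule comp_meet)

lemma K_disj: "K p \<noteq> K q \<Longrightarrow> K p \<inter> K q = {}"
  unfolding K_def by (rule comp_disj)

definition kk :: nat where "kk = (LEAST k::nat. 0 < k \<and> inJ (int k * int a))"
definition ll :: nat where "ll = (LEAST l::nat. 0 < l \<and> (\<exists>j. inJ (int l * int b - j * int a)))"

lemma kk_ex: "\<exists>k::nat. 0 < k \<and> inJ (int k * int a)"
  using m0 inJ_mult[OF inJ_m, of "int a"] by (rule_tac x=m in exI) (simp add: mult.commute)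

lemma kk: "0 < kk" "inJ (int kk * int a)"
  using LeastI_ex[OF kk_ex] unfolding kk_def by auto

lemma kk_min: "0 < k \<Longrightarrow> k < kk \<Longrightarrow> \<not> inJ (int k * int a)"
  using not_less_Least unfolding kk_def by blast

lemma ll_ex: "\<exists>l::nat. 0 < l \<and> (\<exists>j. inJ (int l * int b - j * int a))"
  using m0 inJ_mult[OF inJ_m, of "int b"] by (rule_tac x=m in exI) (auto simp: mult.commute intro!: exI[of _ 0])

lemma ll: "0 < ll" "\<exists>j. inJ (int ll * int b - j * int a)"
  using LeastI_ex[OF ll_ex] unfolding ll_def by auto

lemma ll_min: "0 < l \<Longrightarrow> l < ll \<Longrightarrow> \<not> inJ (int l * int b - j * int a)"
  using not_less_Least unfolding ll_def by blast

definition rep :: "nat \<Rightarrow> nat \<Rightarrow> int" where "rep i j = int i * int b + int j * int a"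

lemma rd_aux:
  assumes "i \<le> i'" "i' < ll" "j < kk" "j' < kk" "inJ (rep i' j' - rep i j)"
  shows "i = i' \<and> j = j'"
proof (cases "i < i'")
  case True
  define d where "d = i' - i"
  have dd: "int d = int i' - int i" using True d_def by simp
  have "rep i' j' - rep i j = int d * int b - (int j - int j') * int a"
    unfolding rep_def dd by (simp add: algebra_simps)
  then have h: "inJ (int d * int b - (int j - int j') * int a)" using assms(5) by simp
  have "0 < d" "d < ll" using True assms d_def by auto
  then have "\<not> inJ (int d * int b - (int j - int j') * int a)" by (rule ll_min)
  then show ?thesis using h by simp
next
  case False
  then have ii: "i = i'" using assms by simp
  have e: "rep i' j' - rep i j = (int j' - int j) * int a" unfolding rep_def ii by (simp add: algebra_simps)
  have h: "inJ ((int j' - int j) * int a)" using assms(5) unfolding e .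
  have "j = j'"
  proof (rule ccontr)
    assume "j \<noteq> j'"
    then consider "j < j'" | "j' < j" by linarith
    then show False
    proof cases
      case 1
      have "int j' - int j = int (j' - j)" using 1 by simp
      then have "inJ (int (j' - j) * int a)" using h by (simp only:)
      moreover have "0 < j' - j" "j' - j < kk" using 1 assms by auto
      ultimately show False using kk_min by blast
    next
      case 2
      have "inJ (- ((int j' - int j) * int a))" using h by (rule inJ_neg)
      moreover have "- ((int j' - int j) * int a) = int (j - j') * int a" using 2 by (simp add: algebra_simps)
      ultimately have "inJ (int (j - j') * int a)" by (simp only:)
      moreover have "0 < j - j'" "j - j' < kk" using 2 assms by auto
      ultimately show False using kk_min by blast
    qed
  qed
  then show ?thesis using ii by simp
qed

lemma rep_distinct:
  assumes "i < ll" "i' < ll" "j < kk" "j' < kk" "K (rep i j) = K (rep i' j')"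
  shows "i = i' \<and> j = j'"
proof (cases "i \<le> i'")
  case True
  then show ?thesis using rd_aux assms K_eq_iff by blast
next
  case False
  have "inJ (rep i' j' - rep i j)" using assms K_eq_iff by blast
  then have "inJ (rep i j - rep i' j')" using inJ_neg by fastforce
  then show ?thesis using rd_aux[of i' i j' j] False assms by simp
qed

lemma W_rep:
  assumes "inJ (p - (i * int b + j * int a))"
  shows "\<exists>i'<ll. \<exists>j'<kk. K p = K (rep i' j')"
proof -
  obtain j0 where h0: "inJ (int ll * int b - j0 * int a)" using ll by blast
  define i0 where "i0 = i mod int ll"
  define q where "q = i div int ll"
  have ieq: "i = q * int ll + i0" unfolding q_def i0_def by simp
  define j1 where "j1 = j + q * j0"
  have e1: "p - (i0 * int b + j1 * int a) = (p - (i * int b + j * int a)) + q * (int ll * int b - j0 * int a)"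
    unfolding j1_def ieq by (simp add: algebra_simps)
  have h1: "inJ (p - (i0 * int b + j1 * int a))"
    unfolding e1 by (rule inJ_add[OF assms inJ_mult[OF h0]])
  define j2 where "j2 = j1 mod int kk"
  define r where "r = j1 div int kk"
  have jeq: "j1 = r * int kk + j2" unfolding r_def j2_def by simp
  have e2: "p - (i0 * int b + j2 * int a) = (p - (i0 * int b + j1 * int a)) + r * (int kk * int a)"
    unfolding jeq by (simp add: algebra_simps)
  have h2: "inJ (p - (i0 * int b + j2 * int a))"
    unfolding e2 by (rule inJ_add[OF h1 inJ_mult[OF kk(2)]])
  have i0r: "0 \<le> i0" "i0 < int ll" using ll(1) unfolding i0_def by auto
  have j2r: "0 \<le> j2" "j2 < int kk" using kk(1) unfolding j2_def by auto
  have "rep (nat i0) (nat j2) = i0 * int b + j2 * int a" unfolding rep_def using i0r j2r by simp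
  then have "K p = K (rep (nat i0) (nat j2))" using inJ_neg[OF h2] K_eq_iff by simp
  moreover have "nat i0 < ll" "nat j2 < kk" using i0r j2r by auto
  ultimately show ?thesis by blast
qed

lemma uu_zneg: "Inl ((i + zneg m a) mod m) = uu m (int i - int a)"
proof -
  have am: "a < m" using aR Rsub by auto
  have "Inl ((i + zneg m a) mod m) = uu m (int i + int (zneg m a))" by (simp add: uu_nat)
  also have "int (zneg m a) = (int m - int a) mod int m" unfolding zneg_def using am by (simp add: zmod_int of_nat_diff)
  also have "uu m (int i + (int m - int a) mod int m) = uu m (int i - int a)"
    unfolding uu_def by (simp add: mod_add_right_eq)
  finally show ?thesis .
qed

lemma vv_zneg: "Inr ((i + zneg m b) mod m) = vv m (int i - int b)"
proof -
  have am: "b < m" using bT Tsub by auto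
  have "Inr ((i + zneg m b) mod m) = vv m (int i + int (zneg m b))" by (simp add: vv_nat)
  also have "int (zneg m b) = (int m - int b) mod int m" unfolding zneg_def using am by (simp add: zmod_int of_nat_diff)
  also have "vv m (int i + (int m - int b) mod int m) = vv m (int i - int b)"
    unfolding vv_def by (simp add: mod_add_right_eq)
  finally show ?thesis .
qed

lemma classify:
  assumes "e \<in> EG"
  shows "e \<in> EH \<or> (\<exists>q. e = {uu m q, uu m (q + int a)}) \<or> (\<exists>q. e = {vv m q, vv m (q + int b)})"
proof -
  from assms consider
      (L) i j where "i < m" "j \<in> R" "e = {Inl i, Inl ((i + j) mod m)}"
    | (Rr) i j where "i < m" "j \<in> T" "e = {Inr i, Inr ((i + j) mod m)}"
    | (M) i j where "i < m" "j \<in> S" "e = {Inl i, Inr ((i + j) mod m)}"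
    unfolding bic_edges_def by blast
  then show ?thesis
  proof cases
    case L
    consider "j = a" | "j = zneg m a" | "j \<in> R - {a, zneg m a}" using L by blast
    then show ?thesis
    proof cases
      case 1
      then have "e = {uu m (int i), uu m (int i + int a)}" using L by (simp add: uu_nat uu_lt)
      then show ?thesis by blast
    next
      case 2
      then have "e = {uu m (int i - int a), uu m (int i - int a + int a)}" using L by (simp add: uu_zneg uu_lt insert_commute)
      then show ?thesis by blast
    next
      case 3
      then have "e \<in> EH" using L unfolding bic_edges_def by blast
      then show ?thesis by blast
    qed
  next
    case Rr
    consider "j = b" | "j = zneg m b" | "j \<in> T - {b, zneg m b}" using Rr by blast
    then show ?thesis
    proof cases
      case 1
      then have "e = {vv m (int i), vv m (int i + int b)}" using Rr by (simp add: vv_nat vv_lt)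
      then show ?thesis by blast
    next
      case 2
      then have "e = {vv m (int i - int b), vv m (int i - int b + int b)}" using Rr by (simp add: vv_zneg vv_lt insert_commute)
      then show ?thesis by blast
    next
      case 3
      then have "e \<in> EH" using Rr unfolding bic_edges_def by blast
      then show ?thesis by blast
    qed
  next
    case M
    then have "e \<in> EH" unfolding bic_edges_def by blast
    then show ?thesis by blast
  qed
qed

end




context bc
begin

lemma cover_aux:
  assumes "(adj EG)\<^sup>*\<^sup>* (Inl 0) x"
  shows "\<exists>p i j. inJ (p - (i * int b + j * int a)) \<and> x \<in> K p"
  using assms
proof (induction rule: rtranclp_induct)
  case base
  have "Inl 0 \<in> K 0" using uu_K[of 0] by (simp add: uu_def)
  then show ?case using inJ_0 by (rule_tac x=0 in exI, rule_tac x=0 in exI, rule_tac x=0 in exI) simp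
next
  case (step y z)
  obtain p i j where pij: "inJ (p - (i * int b + j * int a))" "y \<in> K p" using step(3) by blast
  have e: "{y, z} \<in> EG" using step(2) unfolding adj_def .
  have zV: "z \<in> V" using edges_verts[OF m0 e] by blast
  from classify[OF e] consider "{y, z} \<in> EH" | q where "{y, z} = {uu m q, uu m (q + int a)}"
     | q where "{y, z} = {vv m q, vv m (q + int b)}" by blast
  then show ?case
  proof cases
    case 1
    then have "z \<in> K p" using pij(2) zV unfolding K_def by (rule_tac comp_step) auto
    then show ?thesis using pij by blast
  next
    case 2
    then consider "y = uu m q" "z = uu m (q + int a)" | "y = uu m (q + int a)" "z = uu m q"
      by (auto simp: doubleton_eq_iff)
    then show ?thesis
    proof cases
      case 1
      have "K p = K q" using K_meet[OF pij(2)] uu_K 1 by simp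
      then have "K (q + int a) = K (p + int a)" by (metis K_shift)
      then have "z \<in> K (p + int a)" using 1 uu_K by metis
      moreover have "inJ (p + int a - (i * int b + (j + 1) * int a))" using pij(1) by (simp add: algebra_simps)
      ultimately show ?thesis by blast
    next
      case 2
      have "K p = K (q + int a)" using K_meet[OF pij(2)] uu_K 2 by simp
      then have "K (q + int a + - int a) = K (p + - int a)" by (metis K_shift)
      then have "z \<in> K (p - int a)" using 2 uu_K by (metis add.right_inverse add.assoc diff_conv_add_uminus add_0_right)
      moreover have "inJ (p - int a - (i * int b + (j - 1) * int a))" using pij(1) by (simp add: algebra_simps)
      ultimately show ?thesis by blast
    qed
  next
    case 3
    then consider "y = vv m q" "z = vv m (q + int b)" | "y = vv m (q + int b)" "z = vv m q"
      by (auto simp: doubleton_eq_iff)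
    then show ?thesis
    proof cases
      case 1
      have "K p = K q" using K_meet[OF pij(2)] vv_K 1 by simp
      then have "K (q + int b) = K (p + int b)" by (metis K_shift)
      then have "z \<in> K (p + int b)" using 1 vv_K by metis
      moreover have "inJ (p + int b - ((i + 1) * int b + j * int a))" using pij(1) by (simp add: algebra_simps)
      ultimately show ?thesis by blast
    next
      case 2
      have "K p = K (q + int b)" using K_meet[OF pij(2)] vv_K 2 by simp
      then have "K (q + int b + - int b) = K (p + - int b)" by (metis K_shift)
      then have "z \<in> K (p - int b)" using 2 vv_K by (metis add.right_inverse add.assoc diff_conv_add_uminus add_0_right)
      moreover have "inJ (p - int b - ((i - 1) * int b + j * int a))" using pij(1) by (simp add: algebra_simps)
      ultimately show ?thesis by blast
    qed
  qed
qed

lemma cover: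
  assumes conn: "graph_connected V EG" and x: "x \<in> V"
  shows "\<exists>i<ll. \<exists>j<kk. x \<in> K (rep i j)"
proof -
  have "Inl 0 \<in> V" using m0 unfolding bic_verts_def by auto
  then have "(adj EG)\<^sup>*\<^sup>* (Inl 0) x" using conn x unfolding graph_connected_def by blast
  then obtain p i j where "inJ (p - (i * int b + j * int a))" "x \<in> K p" using cover_aux by blast
  then show ?thesis using W_rep by metis
qed

end




context bc
begin

lemma sw_K0: "x \<in> K 0 \<Longrightarrow> sw x \<in> K 0"
proof -
  assume x: "x \<in> K 0"
  then have "x \<in> V" using K_sub by blast
  then obtain i where i: "i < m" "x = Inl i \<or> x = Inr i" by (auto simp: verts_iff)
  from i(2) show ?thesis
  proof
    assume xi: "x = Inl i"
    then have "x \<in> K (int i)" using uu_K[of "int i"] uu_lt[OF i(1)] by simp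
    then have "K 0 = K (int i)" using K_meet x by blast
    then show ?thesis using vv_K[of "int i"] vv_lt[OF i(1)] xi by (simp add: sw_def)
  next
    assume xi: "x = Inr i"
    then have "x \<in> K (int i)" using vv_K[of "int i"] vv_lt[OF i(1)] by simp
    then have "K 0 = K (int i)" using K_meet x by blast
    then show ?thesis using uu_K[of "int i"] uu_lt[OF i(1)] xi by (simp add: sw_def)
  qed
qed

lemma a_link: "{rot m c (Inl s), rot m (c + int a) (Inl s)} \<in> EG"
proof -
  obtain s' where s': "s' < m" "uu m (int s + c) = Inl s'" using uu_eq[OF m0] by blast
  have ms: "(int s + c) mod int m = int s'" using s' m0 by (auto simp: uu_def nat_eq_iff)
  have "rot m (c + int a) (Inl s) = uu m (int s + c + int a)" by (simp add: rot_Inl add.assoc)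
  also have "\<dots> = uu m ((int s + c) mod int m + int a)" using uu_mod[OF m0, of "int s + c" "int a"] by simp
  also have "\<dots> = Inl ((s' + a) mod m)" unfolding ms by (rule uu_nat)
  finally have "{rot m c (Inl s), rot m (c + int a) (Inl s)} = {Inl s', Inl ((s' + a) mod m)}"
    using s' by (simp add: rot_Inl)
  then show ?thesis unfolding bic_edges_def using s' aR by blast
qed

lemma b_link: "{rot m c (Inr s), rot m (c + int b) (Inr s)} \<in> EG"
proof -
  obtain s' where s': "s' < m" "vv m (int s + c) = Inr s'" using vv_eq[OF m0] by blast
  have ms: "(int s + c) mod int m = int s'" using s' m0 by (auto simp: vv_def nat_eq_iff)
  have "rot m (c + int b) (Inr s) = vv m (int s + c + int b)" by (simp add: rot_Inr add.assoc)
  also have "\<dots> = vv m ((int s + c) mod int m + int b)" using vv_mod[OF m0, of "int s + c" "int b"] by simp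
  also have "\<dots> = Inr ((s' + b) mod m)" unfolding ms by (rule vv_nat)
  finally have "{rot m c (Inr s), rot m (c + int b) (Inr s)} = {Inr s', Inr ((s' + b) mod m)}"
    using s' by (simp add: rot_Inr)
  then show ?thesis unfolding bic_edges_def using s' bT by blast
qed

lemma link_outer:
  assumes "outer_edge e"
  shows "\<exists>x y x' y'. rot m c ` e = {x, y} \<and> rot m (c + int a) ` e = {x', y'} \<and> {x, x'} \<in> EG \<and> {y, y'} \<in> EG"
proof -
  obtain s t where e: "e = {Inl s, Inl t}" using assms unfolding outer_edge_def by blast
  show ?thesis using a_link[of c s] a_link[of c t] e by auto
qed

lemma link_inner:
  assumes "\<exists>i j. f = {Inr i, Inr j}"
  shows "\<exists>x y x' y'. rot m c ` f = {x, y} \<and> rot m (c + int b) ` f = {x', y'} \<and> {x, x'} \<in> EG \<and> {y, y'} \<in> EG"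
proof -
  obtain s t where e: "f = {Inr s, Inr t}" using assms by blast
  show ?thesis using b_link[of c s] b_link[of c t] e by auto
qed

lemma rot_neq: "e \<noteq> e' \<Longrightarrow> e \<subseteq> V \<Longrightarrow> e' \<subseteq> V \<Longrightarrow> rot m c ` e \<noteq> rot m c ` e'"
  using inj_on_image_eq_iff[OF rot_inj[OF m0]] by blast

lemma outer_isl: "outer_edge e \<Longrightarrow> \<exists>x \<in> rot m c ` e. isl x"
  unfolding outer_edge_def by (auto simp: isl_rot)

lemma inner_nisl: "\<exists>i j. f = {Inr i, Inr j} \<Longrightarrow> \<forall>x \<in> rot m c ` f. \<not> isl x"
  by (auto simp: isl_rot)

lemma rep_Suc_j: "rep i (Suc j) = rep i j + int a" unfolding rep_def by (simp add: algebra_simps)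
lemma rep_Suc_i: "rep (Suc i) 0 = rep i 0 + int b" unfolding rep_def by (simp add: algebra_simps)

end

locale bcZ = bc +
  fixes Z0 :: "(nat + nat) list" and e1 e2 f1 f2 :: "(nat + nat) set"
  assumes Z0: "is_cycle EH Z0" "set Z0 = K 0"
    and ee: "e1 \<noteq> e2" "e1 \<in> cycle_edges Z0" "e2 \<in> cycle_edges Z0" "outer_edge e1" "outer_edge e2"
    and ff: "f1 \<noteq> f2" "f1 \<in> cycle_edges Z0" "f2 \<in> cycle_edges Z0"
       "\<exists>i j. f1 = {Inr i, Inr j}" "\<exists>i j. f2 = {Inr i, Inr j}"
begin

definition Xc :: "int \<Rightarrow> (nat + nat) list" where "Xc c = map (rot m c) Z0"

lemma Z0_V: "set Z0 \<subseteq> V" using Z0(2) K_sub by simp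

lemma Xc_cycle: "is_cycle EG (Xc c)"
proof -
  have "is_cycle EH (Xc c)" unfolding Xc_def
    using is_cycle_map[OF Z0(1), of "rot m c" EH] inj_on_subset[OF rot_inj[OF m0] Z0_V] rot_edge[OF m0] by blast
  then show ?thesis using is_cycle_mono EH_EG by blast
qed

lemma Xc_set: "set (Xc c) = K c"
  unfolding Xc_def using K_rot[of c 0] Z0(2) by simp

lemma Xc_edges: "cycle_edges (Xc c) = (\<lambda>e. rot m c ` e) ` cycle_edges Z0"
  unfolding Xc_def by (rule cycle_edges_map)

lemma ce_V: "e \<in> cycle_edges Z0 \<Longrightarrow> e \<subseteq> V"
  using cedge_sub Z0_V by blast

lemma phaseA:
  assumes i: "i < ll"
  shows "\<exists>Y. is_cycle EG Y \<and> set Y = (\<Union>j<kk. K (rep i j)) \<and>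
     rot m (rep i 0) ` f1 \<in> cycle_edges Y \<and> rot m (rep i 0) ` f2 \<in> cycle_edges Y"
proof -
  obtain n where n: "kk = Suc n" using kk(1) gr0_implies_Suc by blast
  define X where "X j = Xc (rep i j)" for j
  define E2 where "E2 j = (if even j then e1 else e2)" for j :: nat
  define P where "P j = rot m (rep i j) ` E2 j" for j
  define Q where "Q j = rot m (rep i (Suc j)) ` E2 j" for j
  have E2: "E2 j \<in> cycle_edges Z0" "outer_edge (E2 j)" for j unfolding E2_def using ee by auto
  have "\<exists>Y. is_cycle EG Y \<and> set Y = (\<Union>j<Suc n. set (X j)) \<and>
     (\<Union>j<Suc n. cycle_edges (X j)) - (P ` {..<n} \<union> Q ` {..<n}) \<subseteq> cycle_edges Y"
  proof (rule chain)
    show "is_cycle EG (X j)" for j unfolding X_def by (rule Xc_cycle)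
    show "set (X j) \<inter> set (X j') = {}" if "j < Suc n" "j' < Suc n" "j \<noteq> j'" for j j'
    proof -
      have "K (rep i j) \<noteq> K (rep i j')" using rep_distinct[of i i j j'] that i n by auto
      then show ?thesis unfolding X_def Xc_set by (rule K_disj)
    qed
    show "P j \<in> cycle_edges (X j) \<and> Q j \<in> cycle_edges (X (Suc j))" for j
      unfolding P_def Q_def X_def Xc_edges using E2 by blast
    show "\<exists>x y x' y'. P j = {x, y} \<and> Q j = {x', y'} \<and> {x, x'} \<in> EG \<and> {y, y'} \<in> EG" for j
      unfolding P_def Q_def rep_Suc_j by (rule link_outer[OF E2(2)])
    show "P (Suc j) \<noteq> Q j" for j
    proof -
      have "E2 (Suc j) \<noteq> E2 j" unfolding E2_def using ee by auto
      then show ?thesis unfolding P_def Q_def using rot_neq ce_V E2 by blast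
    qed
  qed
  then obtain Y where Y: "is_cycle EG Y" "set Y = (\<Union>j<Suc n. set (X j))"
     "(\<Union>j<Suc n. cycle_edges (X j)) - (P ` {..<n} \<union> Q ` {..<n}) \<subseteq> cycle_edges Y" by blast
  have keep: "rot m (rep i 0) ` f \<in> cycle_edges Y" if f: "f \<in> cycle_edges Z0" "\<exists>i j. f = {Inr i, Inr j}" for f
  proof -
    have "rot m (rep i 0) ` f \<in> cycle_edges (X 0)" unfolding X_def Xc_edges using f by blast
    moreover have "rot m (rep i 0) ` f \<notin> P ` {..<n} \<union> Q ` {..<n}"
    proof
      assume "rot m (rep i 0) ` f \<in> P ` {..<n} \<union> Q ` {..<n}"
      then obtain c j where "rot m (rep i 0) ` f = rot m c ` E2 j" unfolding P_def Q_def by blast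
      then show False using outer_isl[OF E2(2), of c j] inner_nisl[OF f(2), of "rep i 0"] by metis
    qed
    ultimately show ?thesis using Y(3) by blast
  qed
  show ?thesis
    using Y(1,2) keep[OF ff(2,4)] keep[OF ff(3,5)] n unfolding X_def Xc_set by auto
qed

lemma ham:
  assumes conn: "graph_connected V EG"
  shows "hamiltonian V EG"
proof -
  have "\<forall>i\<in>{..<ll}. \<exists>Y. is_cycle EG Y \<and> set Y = (\<Union>j<kk. K (rep i j)) \<and>
     rot m (rep i 0) ` f1 \<in> cycle_edges Y \<and> rot m (rep i 0) ` f2 \<in> cycle_edges Y"
    using phaseA by blast
  then obtain Yf where Yf: "\<And>i. i < ll \<Longrightarrow> is_cycle EG (Yf i) \<and> set (Yf i) = (\<Union>j<kk. K (rep i j)) \<and>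
     rot m (rep i 0) ` f1 \<in> cycle_edges (Yf i) \<and> rot m (rep i 0) ` f2 \<in> cycle_edges (Yf i)"
    by (metis bchoice lessThan_iff)
  obtain n where n: "ll = Suc n" using ll(1) gr0_implies_Suc by blast
  define F2 where "F2 j = (if even j then f1 else f2)" for j :: nat
  define P where "P j = rot m (rep j 0) ` F2 j" for j
  define Q where "Q j = rot m (rep (Suc j) 0) ` F2 j" for j
  have F2: "F2 j \<in> cycle_edges Z0" "\<exists>i j'. F2 j = {Inr i, Inr j'}" for j unfolding F2_def using ff by auto
  have F2k: "rot m (rep i 0) ` F2 j \<in> cycle_edges (Yf i)" if "i < ll" for i j
    using Yf[OF that] unfolding F2_def by auto
  have "\<exists>Y. is_cycle EG Y \<and> set Y = (\<Union>j<Suc n. set (Yf j)) \<and>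
     (\<Union>j<Suc n. cycle_edges (Yf j)) - (P ` {..<n} \<union> Q ` {..<n}) \<subseteq> cycle_edges Y"
  proof (rule chain)
    show "is_cycle EG (Yf j)" if "j < Suc n" for j using Yf that n by auto
    show "set (Yf j) \<inter> set (Yf j') = {}" if "j < Suc n" "j' < Suc n" "j \<noteq> j'" for j j'
    proof -
      have "K (rep j x) \<inter> K (rep j' y) = {}" if "x < kk" "y < kk" for x y
      proof -
        have "K (rep j x) \<noteq> K (rep j' y)" using rep_distinct[of j j' x y] that \<open>j < Suc n\<close> \<open>j' < Suc n\<close> \<open>j \<noteq> j'\<close> n by auto
        then show ?thesis by (rule K_disj)
      qed
      then show ?thesis using Yf[of j] Yf[of j'] that n by auto
    qed
    show "P j \<in> cycle_edges (Yf j) \<and> Q j \<in> cycle_edges (Yf (Suc j))" if "j < n" for j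
      unfolding P_def Q_def using F2k that n by auto
    show "\<exists>x y x' y'. P j = {x, y} \<and> Q j = {x', y'} \<and> {x, x'} \<in> EG \<and> {y, y'} \<in> EG" for j
      unfolding P_def Q_def rep_Suc_i by (rule link_inner[OF F2(2)])
    show "P (Suc j) \<noteq> Q j" for j
    proof -
      have "F2 (Suc j) \<noteq> F2 j" unfolding F2_def using ff by auto
      then show ?thesis unfolding P_def Q_def using rot_neq ce_V F2 by blast
    qed
  qed
  then obtain Y where Y: "is_cycle EG Y" "set Y = (\<Union>j<Suc n. set (Yf j))" by blast
  have "set Y = V"
  proof
    show "set Y \<subseteq> V" using Y(2) Yf n subsetD[OF K_sub] by auto
    show "V \<subseteq> set Y"
    proof
      fix x assume "x \<in> V"
      then obtain i j where ij: "i < ll" "j < kk" "x \<in> K (rep i j)" using cover[OF conn] by blast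
      then show "x \<in> set Y" using Y(2) Yf[OF ij(1)] n by auto
    qed
  qed
  then show ?thesis unfolding hamiltonian_def using Y(1) by blast
qed

end


theorem lemma3p4:
  fixes m a b :: nat and R S T :: "nat set"
  assumes "is_bicirculant_data m R S T"
    and "graph_connected (bic_verts m) (bic_edges m R S T)"
    and "card R + card S \<ge> 4"
    and "card R \<ge> 3" and "card T \<ge> 3"
    and "a \<in> R" and "b \<in> T" and "2 * a \<noteq> m" and "2 * b \<noteq> m"
    and "\<forall>x \<in> bic_verts m.
           \<exists>vs. is_cycle (bic_edges m (R - {a, zneg m a}) S (T - {b, zneg m b})) vs \<and>
                set vs = component (bic_verts m) (bic_edges m (R - {a, zneg m a}) S (T - {b, zneg m b})) x \<and>
                card {e \<in> cycle_edges vs. outer_edge e} \<ge> 2"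
  shows "hamiltonian (bic_verts m) (bic_edges m R S T)"
proof -
  have d: "0 < m" "R \<subseteq> {..<m}" "T \<subseteq> {..<m}" "0 \<in> S"
    using assms(1) unfolding is_bicirculant_data_def by (simp_all only: Suc_le_eq One_nat_def)
  interpret bc m R S T a b
    using d(1) d(2) d(3) assms(6) assms(7) d(4) by unfold_locales
  have v0: "Inl 0 \<in> bic_verts m" using d(1) unfolding bic_verts_def by auto
  obtain Z0 where Z0: "is_cycle EH Z0" "set Z0 = component V EH (Inl 0)"
    "card {e \<in> cycle_edges Z0. outer_edge e} \<ge> 2"
    using bspec[OF assms(10) v0] by (elim exE conjE) (rule that)
  have u0: "uu m 0 = Inl 0" by (simp add: uu_def)
  have cK: "component V EH (Inl 0) = K 0" unfolding K_def u0 ..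
  have c2: "card {e \<in> cycle_edges Z0. outer_edge e} \<ge> 2" by (rule Z0(3))
  define OE where "OE = {e \<in> cycle_edges Z0. outer_edge e}"
  have "OE \<noteq> {}"
  proof
    assume "OE = {}"
    moreover have "card OE \<ge> 2" using c2 unfolding OE_def .
    ultimately show False by simp
  qed
  then obtain e1 where e1: "e1 \<in> OE" by blast
  have c2': "card OE \<ge> 2" using c2 unfolding OE_def .
  have ceim: "cycle_edges Z0 = (\<lambda>i. {Z0 ! i, Z0 ! (Suc i mod length Z0)}) ` {..<length Z0}"
    unfolding cycle_edges_def by auto
  have "finite (cycle_edges Z0)" unfolding ceim by simp
  then have finOE: "finite OE" unfolding OE_def by simp
  have "card (OE - {e1}) = card OE - 1" using finOE e1 by (simp add: card_Diff_singleton)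
  then have "card (OE - {e1}) \<ge> 1" using c2' by linarith
  then have "OE - {e1} \<noteq> {}" by (metis card.empty not_one_le_zero)
  then obtain e2 where e2: "e2 \<in> OE" "e2 \<noteq> e1" by blast
  have E1: "e1 \<in> cycle_edges Z0" "outer_edge e1" using e1 unfolding OE_def by auto
  have E2: "e2 \<in> cycle_edges Z0" "outer_edge e2" using e2 unfolding OE_def by auto
  have Z0': "set Z0 = K 0" using Z0(2) cK by (rule trans)
  have sw: "sw x \<in> set Z0" if x: "x \<in> set Z0" for x
  proof -
    have "x \<in> K 0" using x unfolding Z0' .
    then have "sw x \<in> K 0" by (rule sw_K0)
    then show ?thesis unfolding Z0' .
  qed
  have "\<exists>f1 f2. f1 \<noteq> f2 \<and> f1 \<in> cycle_edges Z0 \<and> f2 \<in> cycle_edges Z0 \<and>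
       (\<exists>i j. f1 = {Inr i, Inr j}) \<and> (\<exists>i j. f2 = {Inr i, Inr j})"
    by (rule count_inner[of EH Z0]) (rule Z0(1), erule sw, rule c2)
  then obtain f1 f2 where ff0: "f1 \<noteq> f2 \<and> f1 \<in> cycle_edges Z0 \<and> f2 \<in> cycle_edges Z0 \<and>
       (\<exists>i j. f1 = {Inr i, Inr j}) \<and> (\<exists>i j. f2 = {Inr i, Inr j})"
    by (elim exE) (rule that)
  have ff: "f1 \<noteq> f2" "f1 \<in> cycle_edges Z0" "f2 \<in> cycle_edges Z0"
       "\<exists>i j. f1 = {Inr i, Inr j}" "\<exists>i j. f2 = {Inr i, Inr j}"
    using ff0 by simp_all
  have ne12: "e1 \<noteq> e2" using e2(2) by simp
  interpret bcZ m R S T a b Z0 e1 e2 f1 f2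
    using Z0(1) Z0' ne12 E1 E2 ff by unfold_locales
  show ?thesis by (rule ham[OF assms(2)])
qed

end
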